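(* Let $P$ be a dcpo. The following are equivalent: (1) $\Sigma P$ is a $d^{\ast}$-space; (2) for every family $\{{\uparrow}F_d\mid d\in D\}\subseteq\mathbf{Fin}\,P$ that is filtered under inclusion, every ${\uparrow}F\in\mathbf{Fin}\,P$ and every nonempty Scott open set $U$, if $\bigcap_{d\in D}{\uparrow}F_d\cap{\uparrow}F\subseteq U$, then ${\uparrow}F_d\cap{\uparrow}F\subseteq U$ for some $d\in D$.
   Context: A dcpo is a poset in which every directed subset has a supremum. A subset $U$ of a poset $P$ is Scott open if $U={\uparrow}U$ and, for every directed $D$ whose supremum exists, $\bigvee D\in U$ implies $D\cap U\neq\emptyset$. The space $\Sigma P$ is $P$ with the Scott topology; its specialization order is the order of $P$. $\mathbf{Fin}\,P=\{{\uparrow}F\mid F\subseteq P$ nonempty finite$\}$. A family of sets is filtered if any two of its members contain a common member. All spaces are $T_0$. The specialization order of a space $X$ is given by $x\le y$ iff $x\in cl(\{y\})$. A $T_0$-space $X$ is a $d^{\ast}$-space if for every directed $D\subseteq X$ (in the specialization order), every $x\in X$ and every nonempty open $U\subseteq X$, $\bigcap_{d\in D}{\uparrow}d\cap{\uparrow}x\subseteq U$ implies ${\uparrow}d\cap{\uparrow}x\subseteq U$ for some $d\in D$. *)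

theory Defs
  imports "HOL-Analysis.Analysis"
begin

text \<open>Posets are modelled by the type class order; the poset P is the whole type.\<close>

definition up :: "'a::order set \<Rightarrow> 'a set" where
  "up A = {y. \<exists>x\<in>A. x \<le> y}"

definition directed :: "'a::order set \<Rightarrow> bool" where
  "directed D \<longleftrightarrow> D \<noteq> {} \<and> (\<forall>x\<in>D. \<forall>y\<in>D. \<exists>z\<in>D. x \<le> z \<and> y \<le> z)"

definition is_sup :: "'a::order set \<Rightarrow> 'a \<Rightarrow> bool" where
  "is_sup D s \<longleftrightarrow> (\<forall>x\<in>D. x \<le> s) \<and> (\<forall>u. (\<forall>x\<in>D. x \<le> u) \<longrightarrow> s \<le> u)"

definition dcpo :: "'a::order itself \<Rightarrow> bool" where
  "dcpo _ \<longleftrightarrow> (\<forall>D::'a set. directed D \<longrightarrow> (\<exists>s. is_sup D s))"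

definition scott_open :: "'a::order set \<Rightarrow> bool" where
  "scott_open U \<longleftrightarrow> U = up U \<and>
     (\<forall>D s. directed D \<longrightarrow> is_sup D s \<longrightarrow> s \<in> U \<longrightarrow> D \<inter> U \<noteq> {})"

lemma istopology_scott_open: "istopology scott_open"
  unfolding istopology_def
proof (intro conjI allI impI)
  fix S T :: "'a set" assume S: "scott_open S" and T: "scott_open T"
  show "scott_open (S \<inter> T)"
    unfolding scott_open_def
  proof (intro conjI allI impI)
    have "S = up S" "T = up T" using S T by (auto simp: scott_open_def)
    then show "S \<inter> T = up (S \<inter> T)" unfolding up_def by blast
  next
    fix D s assume D: "directed D" and s: "is_sup D s" and sin: "s \<in> S \<inter> T"
    have "D \<inter> S \<noteq> {}" using S D s sin by (auto simp: scott_open_def)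
    then obtain a where a: "a \<in> D" "a \<in> S" by blast
    have "D \<inter> T \<noteq> {}" using T D s sin by (auto simp: scott_open_def)
    then obtain b where b: "b \<in> D" "b \<in> T" by blast
    obtain c where c: "c \<in> D" "a \<le> c" "b \<le> c" using D a b unfolding directed_def by blast
    have "c \<in> S" using S a c unfolding scott_open_def up_def by blast
    moreover have "c \<in> T" using T b c unfolding scott_open_def up_def by blast
    ultimately show "D \<inter> (S \<inter> T) \<noteq> {}" using c by blast
  qed
next
  fix K :: "'a set set" assume K: "\<forall>S\<in>K. scott_open S"
  show "scott_open (\<Union>K)"
    unfolding scott_open_def
  proof (intro conjI allI impI)
    show "\<Union>K = up (\<Union>K)" using K unfolding scott_open_def up_def by blast
  next
    fix D s assume D: "directed D" and s: "is_sup D s" and sin: "s \<in> \<Union>K"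
    then obtain S where "S \<in> K" "s \<in> S" by blast
    then show "D \<inter> \<Union>K \<noteq> {}" using K D s unfolding scott_open_def by blast
  qed
qed

definition scott_topology :: "'a::order topology" where
  "scott_topology = topology scott_open"

lemma openin_scott_topology: "openin scott_topology U \<longleftrightarrow> scott_open U"
  unfolding scott_topology_def topology_inverse'[OF istopology_scott_open] ..

definition spec_le :: "'a topology \<Rightarrow> 'a \<Rightarrow> 'a \<Rightarrow> bool" where
  "spec_le X x y \<longleftrightarrow> x \<in> X closure_of {y}"

definition spec_up :: "'a topology \<Rightarrow> 'a \<Rightarrow> 'a set" where
  "spec_up X x = {y \<in> topspace X. spec_le X x y}"

definition spec_directed :: "'a topology \<Rightarrow> 'a set \<Rightarrow> bool" where
  "spec_directed X D \<longleftrightarrow> D \<noteq> {} \<and>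
     (\<forall>x\<in>D. \<forall>y\<in>D. \<exists>z\<in>D. spec_le X x z \<and> spec_le X y z)"

definition d_star_space :: "'a topology \<Rightarrow> bool" where
  "d_star_space X \<longleftrightarrow> t0_space X \<and>
     (\<forall>D x U. D \<subseteq> topspace X \<longrightarrow> spec_directed X D \<longrightarrow> x \<in> topspace X \<longrightarrow>
        openin X U \<longrightarrow> U \<noteq> {} \<longrightarrow>
        (\<Inter>d\<in>D. spec_up X d) \<inter> spec_up X x \<subseteq> U \<longrightarrow>
        (\<exists>d\<in>D. spec_up X d \<inter> spec_up X x \<subseteq> U))"

definition Fin :: "'a::order set set" where
  "Fin = {up F | F. finite F \<and> F \<noteq> {}}"

definition filtered :: "'b set set \<Rightarrow> bool" where
  "filtered \<F> \<longleftrightarrow> \<F> \<noteq> {} \<and> (\<forall>A\<in>\<F>. \<forall>B\<in>\<F>. \<exists>C\<in>\<F>. C \<subseteq> A \<and> C \<subseteq> B)"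

end

theory Submission imports Defs begin

lemma chain_inter_fin:
  fixes C :: "'b set set"
  assumes "C \<noteq> {}" "\<forall>A\<in>C. \<forall>B\<in>C. A \<subseteq> B \<or> B \<subseteq> A" "finite S" "\<forall>A\<in>C. A \<inter> S \<noteq> {}"
  shows "\<Inter>C \<inter> S \<noteq> {}"
proof -
  obtain A1 where "A1 \<in> C" using assms(1) by blast
  obtain A0 where A0: "A0 \<in> C" and min: "\<forall>A\<in>C. card (A0 \<inter> S) \<le> card (A \<inter> S)"
    using ex_has_least_nat[of "\<lambda>A. A \<in> C" A1 "\<lambda>A. card (A \<inter> S)"] \<open>A1 \<in> C\<close> by blast
  have "A0 \<inter> S \<subseteq> A" if "A \<in> C" for A
  proof -
    from assms(2) A0 that have "A0 \<subseteq> A \<or> A \<subseteq> A0" by blast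
    then show ?thesis
    proof
      assume "A \<subseteq> A0"
      then have "A \<inter> S \<subseteq> A0 \<inter> S" by blast
      moreover have "card (A0 \<inter> S) \<le> card (A \<inter> S)" using min that by blast
      ultimately have "A \<inter> S = A0 \<inter> S" using card_seteq[of "A0 \<inter> S"] assms(3) by blast
      then show ?thesis by blast
    qed auto
  qed
  then have "A0 \<inter> S \<subseteq> \<Inter>C \<inter> S" by blast
  with assms(4) A0 show ?thesis by blast
qed

lemma rudin:
  fixes G :: "'a::order set set"
  assumes fin: "\<forall>S\<in>G. finite S \<and> S \<noteq> {}" and ne: "G \<noteq> {}"
   and filt: "\<forall>S1\<in>G. \<forall>S2\<in>G. \<exists>S3\<in>G. up S3 \<subseteq> up S1 \<and> up S3 \<subseteq> up S2"
  shows "\<exists>D. directed D \<and> D \<subseteq> \<Union>G \<and> (\<forall>S\<in>G. D \<inter> S \<noteq> {})"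
proof -
  define Q where "Q M \<longleftrightarrow> M \<subseteq> \<Union>G \<and> (\<forall>S\<in>G. M \<inter> S \<noteq> {}) \<and>
      (\<forall>S\<in>G. \<forall>T\<in>G. up T \<subseteq> up S \<longrightarrow> M \<inter> T \<subseteq> up (M \<inter> S))" for M
  define AA where "AA = uminus ` {M. Q M}"
  have QD1: "M \<subseteq> \<Union>G" if "Q M" for M using that unfolding Q_def by blast
  have QD2: "M \<inter> S \<noteq> {}" if "Q M" "S \<in> G" for M S using that unfolding Q_def by blast
  have QD3: "M \<inter> T \<subseteq> up (M \<inter> S)" if "Q M" "S \<in> G" "T \<in> G" "up T \<subseteq> up S" for M S T
    using that unfolding Q_def by blast
  have Q0: "Q (\<Union>G)" unfolding Q_def
  proof (intro conjI ballI impI)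
    fix S assume "S \<in> G" then show "\<Union>G \<inter> S \<noteq> {}" using fin by blast
  next
    fix S T assume "S \<in> G" "T \<in> G" "up T \<subseteq> up S"
    then have "T \<subseteq> up S" unfolding up_def by auto
    then show "\<Union>G \<inter> T \<subseteq> up (\<Union>G \<inter> S)" using \<open>S \<in> G\<close> unfolding up_def by blast
  qed simp
  have "\<exists>M\<in>AA. \<forall>X\<in>AA. M \<subseteq> X \<longrightarrow> X = M"
  proof (rule subset_Zorn)
    fix C assume ch: "subset.chain AA C"
    show "\<exists>U\<in>AA. \<forall>X\<in>C. X \<subseteq> U"
    proof (cases "C = {}")
      case True then show ?thesis using Q0 unfolding AA_def by blast
    next
      case False
      define C' where "C' = uminus ` C"
      have C'Q: "\<forall>A\<in>C'. Q A" using ch unfolding C'_def AA_def subset_chain_def by auto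
      have C'ch: "\<forall>A\<in>C'. \<forall>B\<in>C'. A \<subseteq> B \<or> B \<subseteq> A" using ch unfolding C'_def subset_chain_def by auto
      have C'ne: "C' \<noteq> {}" using False unfolding C'_def by blast
      have QC: "Q (\<Inter>C')" unfolding Q_def
      proof (intro conjI ballI impI)
        show "\<Inter>C' \<subseteq> \<Union>G" using C'Q C'ne QD1 by blast
      next
        fix S assume "S \<in> G"
        have "\<forall>A\<in>C'. A \<inter> S \<noteq> {}" using C'Q QD2 \<open>S \<in> G\<close> by blast
        then show "\<Inter>C' \<inter> S \<noteq> {}" using chain_inter_fin[OF C'ne C'ch, of S] fin \<open>S \<in> G\<close> by blast
      next
        fix S T assume ST: "S \<in> G" "T \<in> G" "up T \<subseteq> up S"
        show "\<Inter>C' \<inter> T \<subseteq> up (\<Inter>C' \<inter> S)"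
        proof
          fix x assume x: "x \<in> \<Inter>C' \<inter> T"
          have "\<forall>A\<in>C'. A \<inter> (S \<inter> {y. y \<le> x}) \<noteq> {}"
          proof
            fix A assume "A \<in> C'"
            then have "x \<in> up (A \<inter> S)" using C'Q x ST QD3 by blast
            then show "A \<inter> (S \<inter> {y. y \<le> x}) \<noteq> {}" unfolding up_def by blast
          qed
          then have "\<Inter>C' \<inter> (S \<inter> {y. y \<le> x}) \<noteq> {}"
            using chain_inter_fin[OF C'ne C'ch, of "S \<inter> {y. y \<le> x}"] fin ST by blast
          then show "x \<in> up (\<Inter>C' \<inter> S)" unfolding up_def by blast
        qed
      qed
      moreover have "\<forall>X\<in>C. X \<subseteq> - \<Inter>C'" unfolding C'_def by blast
      moreover have "- \<Inter>C' \<in> AA" unfolding AA_def by (rule imageI) (simp add: QC)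
      ultimately show ?thesis by blast
    qed
  qed
  then obtain M0 where M0: "M0 \<in> AA" and max0: "\<And>X. X \<in> AA \<Longrightarrow> M0 \<subseteq> X \<Longrightarrow> X = M0" by blast
  obtain M where QM: "Q M" and M0M: "M0 = - M" using M0 unfolding AA_def by blast
  have minM: "X = M" if "Q X" "X \<subseteq> M" for X
  proof -
    have a1: "- X \<in> AA" unfolding AA_def by (rule imageI) (simp add: that)
    have a2: "M0 \<subseteq> - X" using that(2) unfolding M0M by (rule compl_mono)
    have "- X = M0" by (rule max0[OF a1 a2])
    then show ?thesis unfolding M0M by simp
  qed
  have key: "\<exists>S\<in>G. M \<inter> S \<subseteq> up {x}" if "x \<in> M" for x
  proof (rule ccontr)
    assume "\<not> ?thesis"
    then have H: "\<forall>S\<in>G. \<exists>m\<in>M \<inter> S. \<not> x \<le> m" unfolding up_def by blast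
    define M' where "M' = M - up {x}"
    have "Q M'" unfolding Q_def
    proof (intro conjI ballI impI)
      show "M' \<subseteq> \<Union>G" using QD1[OF QM] unfolding M'_def by blast
    next
      fix S assume "S \<in> G" then show "M' \<inter> S \<noteq> {}" using H unfolding M'_def up_def by blast
    next
      fix S T assume ST: "S \<in> G" "T \<in> G" "up T \<subseteq> up S"
      show "M' \<inter> T \<subseteq> up (M' \<inter> S)"
      proof
        fix y assume y: "y \<in> M' \<inter> T"
        then have "y \<in> up (M \<inter> S)" using QD3[OF QM ST] unfolding M'_def by blast
        then obtain m where m: "m \<in> M \<inter> S" "m \<le> y" unfolding up_def by blast
        have "\<not> x \<le> y" using y unfolding M'_def up_def by blast
        have "\<not> x \<le> m"
        proof
          assume "x \<le> m"
          then have "x \<le> y" using m(2) by (rule order_trans)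
          then show False using \<open>\<not> x \<le> y\<close> by simp
        qed
        then have "m \<in> M' \<inter> S" using m unfolding M'_def up_def by auto
        then show "y \<in> up (M' \<inter> S)" using m unfolding up_def by blast
      qed
    qed
    moreover have "M' \<subseteq> M" unfolding M'_def by blast
    ultimately have "M' = M" by (rule minM)
    moreover have "x \<notin> M'" unfolding M'_def up_def by blast
    ultimately show False using that by simp
  qed
  have "directed M" unfolding directed_def
  proof (intro conjI ballI)
    obtain S0 where "S0 \<in> G" using ne by blast
    then have "M \<inter> S0 \<noteq> {}" by (rule QD2[OF QM])
    then show "M \<noteq> {}" by blast
  next
    fix x y assume xM: "x \<in> M" and yM: "y \<in> M"
    obtain S1 where S1: "S1 \<in> G" "M \<inter> S1 \<subseteq> up {x}" using key[OF xM] by (rule bexE)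
    obtain S2 where S2: "S2 \<in> G" "M \<inter> S2 \<subseteq> up {y}" using key[OF yM] by (rule bexE)
    have "\<exists>S3\<in>G. up S3 \<subseteq> up S1 \<and> up S3 \<subseteq> up S2" using filt S1(1) S2(1) by blast
    then obtain S3 where S3: "S3 \<in> G" "up S3 \<subseteq> up S1" "up S3 \<subseteq> up S2" by blast
    have "M \<inter> S3 \<noteq> {}" by (rule QD2[OF QM S3(1)])
    then obtain z where z: "z \<in> M \<inter> S3" by blast
    have "z \<in> up (M \<inter> S1)" using QD3[OF QM S1(1) S3(1) S3(2)] z by (rule subsetD)
    then obtain a where a: "a \<in> M \<inter> S1" "a \<le> z" unfolding up_def by blast
    have "a \<in> up {x}" using S1(2) a(1) by (rule subsetD)
    then have "x \<le> a" by (simp add: up_def)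
    then have xz: "x \<le> z" using a(2) by (rule order_trans)
    have "z \<in> up (M \<inter> S2)" using QD3[OF QM S2(1) S3(1) S3(3)] z by (rule subsetD)
    then obtain b where b: "b \<in> M \<inter> S2" "b \<le> z" unfolding up_def by blast
    have "b \<in> up {y}" using S2(2) b(1) by (rule subsetD)
    then have "y \<le> b" by (simp add: up_def)
    then have yz: "y \<le> z" using b(2) by (rule order_trans)
    have "z \<in> M" using z by simp
    then show "\<exists>z\<in>M. x \<le> z \<and> y \<le> z" using xz yz by blast
  qed
  moreover have "M \<subseteq> \<Union>G" by (rule QD1[OF QM])
  moreover have "\<forall>S\<in>G. M \<inter> S \<noteq> {}" using QD2[OF QM] by blast
  ultimately show ?thesis by blast
qed


lemma up_single: "up {x} = {y. x \<le> y}" unfolding up_def by auto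

lemma scott_open_UNIV: "scott_open (UNIV::'a::order set)"
  unfolding scott_open_def up_def directed_def by auto

lemma topspace_scott: "topspace (scott_topology::'a::order topology) = UNIV"
proof -
  have "openin (scott_topology::'a topology) UNIV" unfolding openin_scott_topology by (rule scott_open_UNIV)
  then have "UNIV \<subseteq> topspace (scott_topology::'a topology)" by (rule openin_subset)
  then show ?thesis by blast
qed

lemma up_single_mono: "a \<le> c \<Longrightarrow> up {c} \<subseteq> up {a}"
proof
  fix y assume "a \<le> c" "y \<in> up {c}"
  then have "c \<le> y" by (simp add: up_def)
  with \<open>a \<le> c\<close> have "a \<le> y" by (rule order_trans)
  then show "y \<in> up {a}" by (simp add: up_def)
qed

lemma scott_open_compl_down: "scott_open (- {z::'a::order. z \<le> y})"
  unfolding scott_open_def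
proof (intro conjI allI impI)
  show "- {z. z \<le> y} = up (- {z. z \<le> y})"
  proof
    show "- {z. z \<le> y} \<subseteq> up (- {z. z \<le> y})" unfolding up_def by blast
    show "up (- {z. z \<le> y}) \<subseteq> - {z. z \<le> y}"
    proof
      fix a assume "a \<in> up (- {z. z \<le> y})"
      then obtain b where b: "\<not> b \<le> y" "b \<le> a" unfolding up_def by blast
      show "a \<in> - {z. z \<le> y}"
      proof
        assume "a \<in> {z. z \<le> y}"
        then have "a \<le> y" by simp
        with b(2) have "b \<le> y" by (rule order_trans)
        with b(1) show False by simp
      qed
    qed
  qed
next
  fix D s assume D: "directed D" and s: "is_sup D s" and sin: "s \<in> - {z. z \<le> y}"
  show "D \<inter> - {z. z \<le> y} \<noteq> {}"
  proof
    assume "D \<inter> - {z. z \<le> y} = {}"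
    then have "\<forall>x\<in>D. x \<le> y" by blast
    then have "s \<le> y" using s unfolding is_sup_def by blast
    then show False using sin by blast
  qed
qed

lemma open_compl_down: "openin (scott_topology::'a::order topology) (- {z. z \<le> y})"
  unfolding openin_scott_topology by (rule scott_open_compl_down)

lemma spec_le_scott: "spec_le (scott_topology::'a::order topology) x y \<longleftrightarrow> x \<le> y"
proof
  assume "spec_le scott_topology x y"
  then have "x \<in> topspace scott_topology \<and> (\<forall>T. x \<in> T \<and> openin scott_topology T \<longrightarrow> (\<exists>z\<in>{y}. z \<in> T))"
    unfolding spec_le_def closure_of_def by (rule CollectD)
  then have H: "\<forall>T. x \<in> T \<and> openin scott_topology T \<longrightarrow> (\<exists>z\<in>{y}. z \<in> T)"
    by (rule conjunct2)
  show "x \<le> y"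
  proof (rule ccontr)
    assume "\<not> x \<le> y"
    then have xin: "x \<in> - {z. z \<le> y}" by simp
    have "\<exists>z\<in>{y}. z \<in> - {z. z \<le> y}" using H[rule_format, OF conjI[OF xin open_compl_down]] .
    then show False by simp
  qed
next
  assume xy: "x \<le> y"
  have "y \<in> T" if "x \<in> T" "openin scott_topology T" for T
  proof -
    have "scott_open T" using that(2) by (simp add: openin_scott_topology)
    then have "T = up T" unfolding scott_open_def by (rule conjunct1)
    moreover have "y \<in> up T" using that(1) xy unfolding up_def by blast
    ultimately show ?thesis by simp
  qed
  then show "spec_le scott_topology x y"
    unfolding spec_le_def closure_of_def topspace_scott by blast
qed

lemma spec_up_scott: "spec_up (scott_topology::'a::order topology) x = up {x}"
  unfolding spec_up_def spec_le_scott topspace_scott up_single by simp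

lemma t0_scott: "t0_space (scott_topology::'a::order topology)"
  unfolding t0_space_def
proof (intro ballI impI)
  fix x y :: 'a assume "x \<noteq> y"
  show "\<exists>U. openin scott_topology U \<and> (x \<notin> U \<longleftrightarrow> y \<in> U)"
  proof (cases "x \<le> y")
    case True
    then have "\<not> y \<le> x" using \<open>x \<noteq> y\<close> by auto
    show ?thesis
    proof (intro exI conjI)
      show "openin scott_topology (- {z. z \<le> x})" by (rule open_compl_down)
      show "(x \<notin> - {z. z \<le> x}) = (y \<in> - {z. z \<le> x})" using \<open>\<not> y \<le> x\<close> by simp
    qed
  next
    case False
    show ?thesis
    proof (intro exI conjI)
      show "openin scott_topology (- {z. z \<le> y})" by (rule open_compl_down)
      show "(x \<notin> - {z. z \<le> y}) = (y \<in> - {z. z \<le> y})" using False by simp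
    qed
  qed
qed

lemma spec_directed_scott: "spec_directed (scott_topology::'a::order topology) D \<longleftrightarrow> directed D"
  unfolding spec_directed_def directed_def spec_le_scott ..

lemma ds_imp:
  fixes D :: "'a::order set"
  assumes "d_star_space (scott_topology::'a topology)" "directed D" "scott_open U" "U \<noteq> {}"
    "(\<Inter>d\<in>D. up {d}) \<inter> up {x} \<subseteq> U"
  shows "\<exists>d\<in>D. up {d} \<inter> up {x} \<subseteq> U"
proof -
  have H: "\<forall>D x U. D \<subseteq> topspace (scott_topology::'a topology) \<longrightarrow> spec_directed scott_topology D \<longrightarrow> x \<in> topspace scott_topology \<longrightarrow>
        openin scott_topology U \<longrightarrow> U \<noteq> {} \<longrightarrow>
        (\<Inter>d\<in>D. spec_up scott_topology d) \<inter> spec_up scott_topology x \<subseteq> U \<longrightarrow>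
        (\<exists>d\<in>D. spec_up scott_topology d \<inter> spec_up scott_topology x \<subseteq> U)"
    using assms(1) unfolding d_star_space_def by (rule conjunct2)
  have h1: "D \<subseteq> topspace (scott_topology::'a topology)" "x \<in> topspace (scott_topology::'a topology)"
    by (simp_all add: topspace_scott)
  have h2: "spec_directed scott_topology D" using assms(2) by (simp add: spec_directed_scott)
  have h3: "openin scott_topology U" using assms(3) by (simp add: openin_scott_topology)
  have h4: "(\<Inter>d\<in>D. spec_up scott_topology d) \<inter> spec_up scott_topology x \<subseteq> U"
    using assms(5) by (simp add: spec_up_scott)
  have "\<exists>d\<in>D. spec_up scott_topology d \<inter> spec_up scott_topology x \<subseteq> U"
    using H[rule_format, OF h1(1) h2 h1(2) h3 assms(4) h4] .
  then show ?thesis by (simp add: spec_up_scott)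
qed

lemma ds_intro:
  assumes H: "\<And>(D::'a::order set) x U. directed D \<Longrightarrow> scott_open U \<Longrightarrow> U \<noteq> {} \<Longrightarrow>
    (\<Inter>d\<in>D. up {d}) \<inter> up {x} \<subseteq> U \<Longrightarrow> \<exists>d\<in>D. up {d} \<inter> up {x} \<subseteq> U"
  shows "d_star_space (scott_topology::'a topology)"
  unfolding d_star_space_def
proof (intro conjI allI impI)
  show "t0_space (scott_topology::'a topology)" by (rule t0_scott)
next
  fix D :: "'a set" and x U
  assume a: "D \<subseteq> topspace scott_topology" "spec_directed scott_topology D" "x \<in> topspace scott_topology"
    "openin scott_topology U" "U \<noteq> {}"
    "(\<Inter>d\<in>D. spec_up scott_topology d) \<inter> spec_up scott_topology x \<subseteq> U"
  have b1: "directed D" using a(2) by (simp add: spec_directed_scott)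
  have b2: "scott_open U" using a(4) by (simp add: openin_scott_topology)
  have b3: "(\<Inter>d\<in>D. up {d}) \<inter> up {x} \<subseteq> U" using a(6) by (simp add: spec_up_scott)
  have "\<exists>d\<in>D. up {d} \<inter> up {x} \<subseteq> U" by (rule H[OF b1 b2 a(5) b3])
  then show "\<exists>d\<in>D. spec_up scott_topology d \<inter> spec_up scott_topology x \<subseteq> U"
    by (simp add: spec_up_scott)
qed

lemma filtered_finite:
  assumes "filtered FF" "finite S"
    and mono: "\<And>x A B. A \<in> FF \<Longrightarrow> B \<in> FF \<Longrightarrow> B \<subseteq> A \<Longrightarrow> P x A \<Longrightarrow> P x B"
    and "\<forall>x\<in>S. \<exists>A\<in>FF. P x A"
  shows "\<exists>A\<in>FF. \<forall>x\<in>S. P x A"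
  using assms(2,4)
proof (induction S rule: finite_induct)
  case empty
  then show ?case using assms(1) unfolding filtered_def by blast
next
  case (insert a S)
  then obtain A where A: "A \<in> FF" "\<forall>x\<in>S. P x A" by blast
  obtain B where B: "B \<in> FF" "P a B" using insert.prems by blast
  obtain C where C: "C \<in> FF" "C \<subseteq> A" "C \<subseteq> B" using assms(1) A B unfolding filtered_def by blast
  have "P x C" if "x \<in> insert a S" for x
  proof (cases "x = a")
    case True
    then show ?thesis using mono[OF B(1) C(1) C(3) B(2)] by simp
  next
    case False
    then have "x \<in> S" using that by simp
    then have "P x A" using A(2) by blast
    then show ?thesis by (rule mono[OF A(1) C(1) C(2)])
  qed
  then have "\<forall>x\<in>insert a S. P x C" by blast
  then show ?case using C by blast
qed

lemma dir1:
    assumes H: "(\<forall>(\<F>::'a::order set set) (F::'a set) (U::'a set). \<F> \<subseteq> Fin \<longrightarrow> filtered \<F> \<longrightarrow> F \<in> Fin \<longrightarrow>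
       scott_open U \<longrightarrow> U \<noteq> {} \<longrightarrow>
       \<Inter>\<F> \<inter> F \<subseteq> U \<longrightarrow> (\<exists>A\<in>\<F>. A \<inter> F \<subseteq> U))"
  shows "(\<forall>D (x::'a) U. directed D \<longrightarrow> scott_open U \<longrightarrow> U \<noteq> {} \<longrightarrow>
        (\<Inter>d\<in>D. up {d}) \<inter> up {x} \<subseteq> U \<longrightarrow> (\<exists>d\<in>D. up {d} \<inter> up {x} \<subseteq> U))"
proof (intro allI impI)
  fix D x U
  assume D: "directed (D::'a set)" and U: "scott_open U" "U \<noteq> {}"
    and sub: "(\<Inter>d\<in>D. up {d}) \<inter> up {x} \<subseteq> U"
  define FF where "FF = (\<lambda>d. up {d}) ` D"
  have fin1: "up {y} \<in> Fin" for y :: 'a unfolding Fin_def by blast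
  have "FF \<subseteq> Fin" unfolding FF_def using fin1 by blast
  moreover have "filtered FF" unfolding filtered_def FF_def
  proof (intro conjI ballI)
    show "(\<lambda>d. up {d}) ` D \<noteq> {}" using D unfolding directed_def by blast
  next
    fix A B assume "A \<in> (\<lambda>d. up {d}) ` D" "B \<in> (\<lambda>d. up {d}) ` D"
    then obtain a b where ab: "a \<in> D" "b \<in> D" "A = up {a}" "B = up {b}" by blast
    then obtain c where c: "c \<in> D" "a \<le> c" "b \<le> c" using D unfolding directed_def by blast
    then have "up {c} \<subseteq> A" "up {c} \<subseteq> B" using ab up_single_mono by auto
    then show "\<exists>C\<in>(\<lambda>d. up {d}) ` D. C \<subseteq> A \<and> C \<subseteq> B" using c by blast
  qed
  moreover have "\<Inter>FF \<inter> up {x} \<subseteq> U" using sub unfolding FF_def by simp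
  ultimately have "\<exists>A\<in>FF. A \<inter> up {x} \<subseteq> U" using H[rule_format, of FF "up {x}" U] fin1 U by simp
  then obtain A where "A \<in> FF" "A \<inter> up {x} \<subseteq> U" by blast
  then show "\<exists>d\<in>D. up {d} \<inter> up {x} \<subseteq> U" unfolding FF_def by blast
qed

lemma dir2:
    assumes H: "(\<forall>D (x::'a::order) U. directed D \<longrightarrow> scott_open U \<longrightarrow> U \<noteq> {} \<longrightarrow>
        (\<Inter>d\<in>D. up {d}) \<inter> up {x} \<subseteq> U \<longrightarrow> (\<exists>d\<in>D. up {d} \<inter> up {x} \<subseteq> U))"
  shows "(\<forall>(\<F>::'a set set) (F::'a set) (U::'a set). \<F> \<subseteq> Fin \<longrightarrow> filtered \<F> \<longrightarrow> F \<in> Fin \<longrightarrow>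
       scott_open U \<longrightarrow> U \<noteq> {} \<longrightarrow>
       \<Inter>\<F> \<inter> F \<subseteq> U \<longrightarrow> (\<exists>A\<in>\<F>. A \<inter> F \<subseteq> U))"
proof (intro allI impI)
  fix FF :: "'a set set" and F :: "'a set" and U :: "'a set"
  assume FF: "FF \<subseteq> Fin" "filtered FF" and F: "F \<in> Fin" and U: "scott_open U" "U \<noteq> {}"
    and sub: "\<Inter>FF \<inter> F \<subseteq> U"
  show "\<exists>A\<in>FF. A \<inter> F \<subseteq> U"
  proof (rule ccontr)
    assume nex: "\<not> ?thesis"
    obtain F0 where F0: "finite F0" "F0 \<noteq> {}" "F = up F0" using F unfolding Fin_def by blast
    have Fun: "F = (\<Union>x\<in>F0. up {x})" unfolding F0(3) up_def by auto
    have "\<exists>x\<in>F0. \<forall>A\<in>FF. \<not> A \<inter> up {x} \<subseteq> U"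
    proof (rule ccontr)
      assume "\<not> ?thesis"
      then have "\<forall>x\<in>F0. \<exists>A\<in>FF. A \<inter> up {x} \<subseteq> U" by blast
      then obtain A where "A \<in> FF" "\<forall>x\<in>F0. A \<inter> up {x} \<subseteq> U"
        using filtered_finite[OF FF(2) F0(1), of "\<lambda>x A. A \<inter> up {x} \<subseteq> U"] by blast
      then have "A \<inter> F \<subseteq> U" unfolding Fun by blast
      then show False using nex \<open>A \<in> FF\<close> by blast
    qed
    then obtain x where x: "x \<in> F0" "\<And>A. A \<in> FF \<Longrightarrow> \<not> A \<inter> up {x} \<subseteq> U" by blast
    define g where "g A = (SOME F. finite F \<and> F \<noteq> {} \<and> A = up F)" for A :: "'a set"
    have g: "finite (g A) \<and> g A \<noteq> {} \<and> A = up (g A)" if "A \<in> FF" for A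
    proof -
      have "\<exists>F. finite F \<and> F \<noteq> {} \<and> A = up F" using that FF(1) unfolding Fin_def by blast
      then show ?thesis unfolding g_def by (rule someI_ex)
    qed
    define h where "h A = {f \<in> g A. \<not> up {f} \<inter> up {x} \<subseteq> U}" for A
    define G where "G = h ` FF"
    have hne: "h A \<noteq> {}" if AF: "A \<in> FF" for A
    proof -
      obtain y where y: "y \<in> A" "x \<le> y" "y \<notin> U" using x(2)[OF AF] unfolding up_def by blast
      then obtain f where f: "f \<in> g A" "f \<le> y" using g[OF AF] unfolding up_def by blast
      then have "\<not> up {f} \<inter> up {x} \<subseteq> U" using y unfolding up_def by blast
      then show ?thesis using f unfolding h_def by blast
    qed
    have hsub: "up (h C) \<subseteq> up (h A)" if "A \<in> FF" "C \<in> FF" "C \<subseteq> A" for A C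
    proof
      fix y assume "y \<in> up (h C)"
      then obtain c where c: "c \<in> h C" "c \<le> y" unfolding up_def by blast
      then have "c \<in> C" using g[OF that(2)] unfolding h_def up_def by blast
      then have "c \<in> up (g A)" using that g[OF that(1)] by blast
      then obtain f where f: "f \<in> g A" "f \<le> c" unfolding up_def by blast
      have "\<not> up {c} \<inter> up {x} \<subseteq> U" using c unfolding h_def by blast
      moreover have "up {c} \<subseteq> up {f}" using f(2) by (rule up_single_mono)
      ultimately have "f \<in> h A" using f unfolding h_def by blast
      moreover have "f \<le> y" using f(2) c(2) by (rule order_trans)
      ultimately show "y \<in> up (h A)" unfolding up_def by blast
    qed
    have "\<exists>D. directed D \<and> D \<subseteq> \<Union>G \<and> (\<forall>S\<in>G. D \<inter> S \<noteq> {})"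
    proof (rule rudin)
      show "\<forall>S\<in>G. finite S \<and> S \<noteq> {}" unfolding G_def
        using hne g unfolding h_def by auto
      show "G \<noteq> {}" using FF(2) unfolding G_def filtered_def by blast
      show "\<forall>S1\<in>G. \<forall>S2\<in>G. \<exists>S3\<in>G. up S3 \<subseteq> up S1 \<and> up S3 \<subseteq> up S2"
      proof (intro ballI)
        fix S1 S2 assume "S1 \<in> G" "S2 \<in> G"
        then obtain A B where AB: "A \<in> FF" "B \<in> FF" "S1 = h A" "S2 = h B" unfolding G_def by blast
        then obtain C where C: "C \<in> FF" "C \<subseteq> A" "C \<subseteq> B" using FF(2) unfolding filtered_def by blast
        show "\<exists>S3\<in>G. up S3 \<subseteq> up S1 \<and> up S3 \<subseteq> up S2"
          using hsub[OF AB(1) C(1,2)] hsub[OF AB(2) C(1,3)] AB C unfolding G_def by blast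
      qed
    qed
    then obtain D where D: "directed D" "D \<subseteq> \<Union>G" "\<forall>S\<in>G. D \<inter> S \<noteq> {}" by blast
    have "\<not> (\<exists>d\<in>D. up {d} \<inter> up {x} \<subseteq> U)"
    proof
      assume "\<exists>d\<in>D. up {d} \<inter> up {x} \<subseteq> U"
      then obtain d where "d \<in> D" "up {d} \<inter> up {x} \<subseteq> U" by blast
      moreover obtain A where "A \<in> FF" "d \<in> h A" using D(2) \<open>d \<in> D\<close> unfolding G_def by blast
      ultimately show False unfolding h_def by blast
    qed
    then have "\<not> (\<Inter>d\<in>D. up {d}) \<inter> up {x} \<subseteq> U" using H[rule_format, of D U x] D(1) U by blast
    then obtain y where y: "y \<in> (\<Inter>d\<in>D. up {d})" "x \<le> y" "y \<notin> U" unfolding up_def by blast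
    have "y \<in> \<Inter>FF"
    proof
      fix A assume "A \<in> FF"
      then obtain d where d: "d \<in> D" "d \<in> h A" using D(3) unfolding G_def by blast
      then have "d \<le> y" using y(1) unfolding up_def by blast
      moreover have "d \<in> g A" using d unfolding h_def by blast
      ultimately show "y \<in> A" using g[OF \<open>A \<in> FF\<close>] unfolding up_def by blast
    qed
    moreover have "y \<in> F" using y x(1) unfolding F0(3) up_def by blast
    ultimately show False using sub y(3) by blast
  qed
qed

theorem mainTheorem2:
  assumes "dcpo TYPE('a::order)"
  shows "d_star_space (scott_topology :: 'a topology) \<longleftrightarrow>
    (\<forall>(\<F>::'a set set) (F::'a set) (U::'a set). \<F> \<subseteq> Fin \<longrightarrow> filtered \<F> \<longrightarrow> F \<in> Fin \<longrightarrow>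
       scott_open U \<longrightarrow> U \<noteq> {} \<longrightarrow>
       \<Inter>\<F> \<inter> F \<subseteq> U \<longrightarrow> (\<exists>A\<in>\<F>. A \<inter> F \<subseteq> U))"
proof
  assume ds: "d_star_space (scott_topology :: 'a topology)"
  have A: "\<forall>D (x::'a) U. directed D \<longrightarrow> scott_open U \<longrightarrow> U \<noteq> {} \<longrightarrow>
        (\<Inter>d\<in>D. up {d}) \<inter> up {x} \<subseteq> U \<longrightarrow> (\<exists>d\<in>D. up {d} \<inter> up {x} \<subseteq> U)"
    by (intro allI impI) (rule ds_imp[OF ds], assumption+)
  then show "(\<forall>(\<F>::'a set set) (F::'a set) (U::'a set). \<F> \<subseteq> Fin \<longrightarrow> filtered \<F> \<longrightarrow> F \<in> Fin \<longrightarrow>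
       scott_open U \<longrightarrow> U \<noteq> {} \<longrightarrow>
       \<Inter>\<F> \<inter> F \<subseteq> U \<longrightarrow> (\<exists>A\<in>\<F>. A \<inter> F \<subseteq> U))"
    by (rule dir2)
next
  assume fs: "(\<forall>(\<F>::'a set set) (F::'a set) (U::'a set). \<F> \<subseteq> Fin \<longrightarrow> filtered \<F> \<longrightarrow> F \<in> Fin \<longrightarrow>
       scott_open U \<longrightarrow> U \<noteq> {} \<longrightarrow>
       \<Inter>\<F> \<inter> F \<subseteq> U \<longrightarrow> (\<exists>A\<in>\<F>. A \<inter> F \<subseteq> U))"
  have A: "\<forall>D (x::'a) U. directed D \<longrightarrow> scott_open U \<longrightarrow> U \<noteq> {} \<longrightarrow>
        (\<Inter>d\<in>D. up {d}) \<inter> up {x} \<subseteq> U \<longrightarrow> (\<exists>d\<in>D. up {d} \<inter> up {x} \<subseteq> U)"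
    by (rule dir1[OF fs])
  show "d_star_space (scott_topology :: 'a topology)"
    by (rule ds_intro) (rule A[rule_format], assumption+)
qed

end
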